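(* Let $\Gamma$ be a typing environment and $\tau$ a refinement type all of whose refinements are local. Then $\Gamma\vdash\tau\preceq\lceil\tau\rceil$ and $\Gamma\vdash\lceil\tau\rceil\preceq\tau$ hold in the gradual refinement type system.
   Context: Refinement types $\tau ::= \{v{:}b\mid p\}\mid x{:}\tau\to\tau$ with $b\in\{\mathrm{Int},\mathrm{Bool}\}$. A predicate $p$ refining $v$ is local iff for every closing substitution $\theta$ there is a value $w$ with $\theta(p[w/v])$ evaluating to true. $\lceil\tau\rceil$ replaces every refinement by the unknown refinement: $\lceil\{v{:}b\mid p\}\rceil=\{v{:}b\mid ?\}$, $\lceil x{:}\tau_x\to\tau\rceil = x{:}\lceil\tau_x\rceil\to\lceil\tau\rceil$. Gradual predicates are $p$ or $p\land ?$ ($p$ local; $?$ means $\mathrm{true}\land ?$). Specificity: $p_1\preceq p_2$ iff for all closing $\theta$, $\theta(p_1)$ true implies $\theta(p_2)$ true. Concretization: $\gamma(p)=\{p\}$, $\gamma(p\land ?)=\{p'\mid p'\preceq p,\ p'$ local$\}$, extended pointwise to types and environments. Gradual subtyping: for functions, $\Gamma\vdash x{:}\tau_{x1}\to\tau_1\preceq x{:}\tau_{x2}\to\tau_2$ if $\Gamma\vdash\tau_{x2}\preceq\tau_{x1}$ and $\Gamma,x{:}\tau_{x2}\vdash\tau_1\preceq\tau_2$; for base types, $\tilde\Gamma\vdash\{v{:}b\mid\tilde p_1\}\preceq\{v{:}b\mid\tilde p_2\}$ holds iff there exist $\Gamma'\in\gamma(\tilde\Gamma)$, $p_i\in\gamma(\tilde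 p_i)$ such that for every substitution $\theta$ of the variables of $\Gamma',v{:}b$ by values of their types, $\theta(p_1)$ true implies $\theta(p_2)$ true. *)

theory Defs
  imports Main
begin

type_synonym var = string

datatype base = BInt | BBool

datatype val = VInt int | VBool bool

fun has_base :: "val \<Rightarrow> base \<Rightarrow> bool" where
  "has_base (VInt _) b = (b = BInt)"
| "has_base (VBool _) b = (b = BBool)"

text \<open>A predicate refining the distinguished refinement variable v is modelled
semantically: given the value w substituted for v and a closing substitution
theta for all other variables, it yields the truth value of theta(p[w/v]).\<close>
type_synonym refn = "val \<Rightarrow> (var \<Rightarrow> val) \<Rightarrow> bool"

definition local :: "base \<Rightarrow> refn \<Rightarrow> bool" where
  "local b p \<longleftrightarrow> (\<forall>\<theta>. \<exists>w. has_base w b \<and> p w \<theta>)"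

definition spec :: "refn \<Rightarrow> refn \<Rightarrow> bool" where
  "spec p1 p2 \<longleftrightarrow> (\<forall>w \<theta>. p1 w \<theta> \<longrightarrow> p2 w \<theta>)"

datatype ty = TBase base refn | TFun var ty ty

datatype gpred = GStatic refn | GImp refn  \<comment> \<open>p or p \<and> ?\<close>

datatype gty = GBase base gpred | GFun var gty gty

fun embed :: "ty \<Rightarrow> gty" where
  "embed (TBase b p) = GBase b (GStatic p)"
| "embed (TFun x a r) = GFun x (embed a) (embed r)"

text \<open>The unknown refinement ? is true \<and> ?.\<close>
fun unk :: "ty \<Rightarrow> gty" where
  "unk (TBase b p) = GBase b (GImp (\<lambda>_ _. True))"
| "unk (TFun x a r) = GFun x (unk a) (unk r)"

fun all_local :: "ty \<Rightarrow> bool" where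
  "all_local (TBase b p) = local b p"
| "all_local (TFun x a r) = (all_local a \<and> all_local r)"

fun gty_wf :: "gty \<Rightarrow> bool" where
  "gty_wf (GBase b (GStatic p)) = True"
| "gty_wf (GBase b (GImp p)) = local b p"
| "gty_wf (GFun x a r) = (gty_wf a \<and> gty_wf r)"

fun gamma_pred :: "base \<Rightarrow> gpred \<Rightarrow> refn set" where
  "gamma_pred b (GStatic p) = {p}"
| "gamma_pred b (GImp p) = {p'. spec p' p \<and> local b p'}"

fun gamma_ty :: "gty \<Rightarrow> ty set" where
  "gamma_ty (GBase b gp) = {TBase b p | p. p \<in> gamma_pred b gp}"
| "gamma_ty (GFun x a r) = {TFun x a' r' | a' r'. a' \<in> gamma_ty a \<and> r' \<in> gamma_ty r}"

text \<open>Environments: lists of bindings; extension \<Gamma>, x:\<tau> is (x,\<tau>) # \<Gamma>,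
so the most recent binding of a variable is found first.\<close>
type_synonym senv = "(var \<times> ty) list"
type_synonym genv = "(var \<times> gty) list"

definition gamma_env :: "genv \<Rightarrow> senv set" where
  "gamma_env G = {E. list_all2 (\<lambda>(x, g) (y, t). x = y \<and> t \<in> gamma_ty g) G E}"

definition closes_env :: "senv \<Rightarrow> (var \<Rightarrow> val) \<Rightarrow> bool" where
  "closes_env E \<theta> \<longleftrightarrow> (\<forall>x b p. map_of E x = Some (TBase b p) \<longrightarrow> has_base (\<theta> x) b)"

inductive gsub :: "genv \<Rightarrow> gty \<Rightarrow> gty \<Rightarrow> bool" where
  gsub_base: "\<lbrakk> E \<in> gamma_env G; p1 \<in> gamma_pred b gp1; p2 \<in> gamma_pred b gp2;
      \<forall>\<theta> w. closes_env E \<theta> \<and> has_base w b \<longrightarrow> p1 w \<theta> \<longrightarrow> p2 w \<theta> \<rbrakk>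
    \<Longrightarrow> gsub G (GBase b gp1) (GBase b gp2)"
| gsub_fun: "\<lbrakk> gsub G a2 a1; gsub ((x, a2) # G) r1 r2 \<rbrakk>
    \<Longrightarrow> gsub G (GFun x a1 r1) (GFun x a2 r2)"

end

theory Submission
  imports Defs
begin

lemma wf_nonempty: "gty_wf g \<Longrightarrow> \<exists>t. t \<in> gamma_ty g"
proof (induction g)
  case (GBase b gp)
  then show ?case
  proof (cases gp)
    case (GStatic p) then show ?thesis by auto
  next
    case (GImp p) then show ?thesis using GBase by (auto simp: spec_def)
  qed
next
  case (GFun x a r) then show ?case by auto
qed

lemma env_nonempty: "\<forall>(x, g) \<in> set G. gty_wf g \<Longrightarrow> \<exists>E. E \<in> gamma_env G"
proof (induction G)
  case Nil then show ?case by (auto simp: gamma_env_def)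
next
  case (Cons a G)
  obtain x g where a: "a = (x, g)" by fastforce
  from Cons obtain E where E: "E \<in> gamma_env G" by auto
  from Cons a obtain t where t: "t \<in> gamma_ty g" using wf_nonempty by auto
  have "(x, t) # E \<in> gamma_env ((x, g) # G)" using E t by (auto simp: gamma_env_def)
  then show ?case using a by blast
qed

lemma unk_wf: "gty_wf (unk t)"
proof (induction t)
  case (TBase b p) then show ?case
    by (cases b) (auto simp: local_def intro: exI[of _ "VInt 0"] exI[of _ "VBool True"])
qed auto

lemma embed_wf: "gty_wf (embed t)"
  by (induction t) auto

lemma main: "\<forall>(x, g) \<in> set G. gty_wf g \<Longrightarrow> all_local \<tau> \<Longrightarrow>
   gsub G (embed \<tau>) (unk \<tau>) \<and> gsub G (unk \<tau>) (embed \<tau>)"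
proof (induction \<tau> arbitrary: G)
  case (TBase b p)
  from env_nonempty[OF TBase(1)] obtain E where E: "E \<in> gamma_env G" by auto
  have pin: "p \<in> gamma_pred b (GImp (\<lambda>_ _. True))" using TBase(2) by (auto simp: spec_def)
  have "gsub G (GBase b (GStatic p)) (GBase b (GImp (\<lambda>_ _. True)))"
    by (rule gsub_base[OF E _ pin]) auto
  moreover have "gsub G (GBase b (GImp (\<lambda>_ _. True))) (GBase b (GStatic p))"
    by (rule gsub_base[OF E pin]) auto
  ultimately show ?case by simp
next
  case (TFun x a r)
  have wa: "\<forall>(y, g) \<in> set ((x, unk a) # G). gty_wf g" using TFun(3) unk_wf by auto
  have wb: "\<forall>(y, g) \<in> set ((x, embed a) # G). gty_wf g" using TFun(3) embed_wf by auto
  have A: "gsub G (embed a) (unk a) \<and> gsub G (unk a) (embed a)" using TFun by auto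
  have R1: "gsub ((x, unk a) # G) (embed r) (unk r)" using TFun(2)[OF wa] TFun(4) by auto
  have R2: "gsub ((x, embed a) # G) (unk r) (embed r)" using TFun(2)[OF wb] TFun(4) by auto
  show ?case using A R1 R2 by (auto intro: gsub_fun)
qed

theorem mainTheorem6:
  fixes G :: genv and \<tau> :: ty
  assumes "\<forall>(x, g) \<in> set G. gty_wf g"
    and "all_local \<tau>"
  shows "gsub G (embed \<tau>) (unk \<tau>) \<and> gsub G (unk \<tau>) (embed \<tau>)"
  using main[OF assms] .

end
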